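(* A circular net $f:\mathbb Z^2\to\mathbb R^N$ (in general position) is a discrete isothermic net if and only if the function $q(u)=q(f,f_1,f_{12},f_2)$ satisfies, for every $u\in\mathbb Z^2$, $$q\cdot q_{-1,-2}=q_{-1}\cdot q_{-2},$$ where $q_{-1}=q(u-e_1)=q(f_{-1},f,f_2,f_{-1,2})$, $q_{-2}=q(u-e_2)=q(f_{-2},f_{1,-2},f_1,f)$, and $q_{-1,-2}=q(u-e_1-e_2)=q(f_{-1,-2},f_{-2},f,f_{-1})$.
   Context: Notation: for $f:\mathbb Z^m\to\mathbb R^N$, $f=f(u)$, $f_i=f(u+e_i)$, $f_{ij}=f(u+e_i+e_j)$ with $e_i$ the unit vectors; negative indices denote backward shifts, e.g. $f_{-1}=f(u-e_1)$, $f_{1,-2}=f(u+e_1-e_2)$. A Q-net is a map such that each elementary quadrilateral $(f,f_i,f_{ij},f_j)$ ($i\ne j$) is planar, assumed non-degenerate (distinct vertices, no three collinear, diagonals meeting in a point distinct from the vertices). Two planar quadrilaterals $(A,B,C,D)$, $(A^*,B^*,C^*,D^* )$ are dual if $A^*B^*\parallel AB$, $B^*C^*\parallel BC$, $C^*D^*\parallel CD$, $D^*A^*\parallel DA$, $A^*C^*\parallel BD$, $B^*D^*\parallel AC$. A Q-net $f$ is a discrete Koenigs net if there is a Q-net $f^*$ with every $(f^*,f^*_i,f^*_{ij},f^*_j)$ dual to $(f,f_i,f_{ij},f_j)$. A circular net is a Q-net all of whose elementary quadrilaterals have their four vertices on a circle. A discrete isothermic net is a circular net which is a discrete Koenigs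 net. For four concircular points $a,b,c,d\in\mathbb R^N$, their cross-ratio is $q(a,b,c,d)=(a-b)(b-c)^{-1}(c-d)(d-a)^{-1}$, computed after identifying a $2$-plane containing them with $\mathbb C$ (complex multiplication); it is real and independent of the identification (equivalently, computed in the Clifford algebra of $\mathbb R^N$). *)

theory Defs
  imports "HOL-Analysis.Analysis"
begin

type_synonym 'a net2 = "int \<times> int \<Rightarrow> 'a"

definition sh :: "int \<Rightarrow> int \<Rightarrow> int \<times> int \<Rightarrow> int \<times> int" where
  "sh a b u = (fst u + a, snd u + b)"

definition nondeg_planar_quad :: "'a::euclidean_space \<Rightarrow> 'a \<Rightarrow> 'a \<Rightarrow> 'a \<Rightarrow> bool" where
  "nondeg_planar_quad A B C D \<longleftrightarrow>
     aff_dim {A, B, C, D} \<le> 2 \<and>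
     distinct [A, B, C, D] \<and>
     \<not> collinear {A, B, C} \<and> \<not> collinear {A, B, D} \<and>
     \<not> collinear {A, C, D} \<and> \<not> collinear {B, C, D} \<and>
     (\<exists>X. X \<in> affine hull {A, C} \<and> X \<in> affine hull {B, D} \<and> X \<notin> {A, B, C, D})"

definition Q_net :: "('a::euclidean_space) net2 \<Rightarrow> bool" where
  "Q_net f \<longleftrightarrow> (\<forall>u. nondeg_planar_quad (f u) (f (sh 1 0 u)) (f (sh 1 1 u)) (f (sh 0 1 u)))"

definition parallel :: "'a::real_vector \<Rightarrow> 'a \<Rightarrow> bool" where
  "parallel x y \<longleftrightarrow> (\<exists>c::real. x = c *\<^sub>R y)"

definition dual_quads :: "'a::euclidean_space \<Rightarrow> 'a \<Rightarrow> 'a \<Rightarrow> 'a \<Rightarrow> 'a \<Rightarrow> 'a \<Rightarrow> 'a \<Rightarrow> 'a \<Rightarrow> bool" where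
  "dual_quads A B C D A' B' C' D' \<longleftrightarrow>
     parallel (B' - A') (B - A) \<and> parallel (C' - B') (C - B) \<and>
     parallel (D' - C') (D - C) \<and> parallel (A' - D') (A - D) \<and>
     parallel (C' - A') (D - B) \<and> parallel (D' - B') (C - A)"

definition Koenigs_net :: "('a::euclidean_space) net2 \<Rightarrow> bool" where
  "Koenigs_net f \<longleftrightarrow> Q_net f \<and>
     (\<exists>g::'a net2. Q_net g \<and>
        (\<forall>u. dual_quads (f u) (f (sh 1 0 u)) (f (sh 1 1 u)) (f (sh 0 1 u))
                        (g u) (g (sh 1 0 u)) (g (sh 1 1 u)) (g (sh 0 1 u))))"

definition concircular :: "'a::euclidean_space \<Rightarrow> 'a \<Rightarrow> 'a \<Rightarrow> 'a \<Rightarrow> bool" where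
  "concircular A B C D \<longleftrightarrow> aff_dim {A, B, C, D} \<le> 2 \<and>
     (\<exists>c r. c \<in> affine hull {A, B, C, D} \<and>
        dist A c = r \<and> dist B c = r \<and> dist C c = r \<and> dist D c = r)"

definition circular_net :: "('a::euclidean_space) net2 \<Rightarrow> bool" where
  "circular_net f \<longleftrightarrow> Q_net f \<and>
     (\<forall>u. concircular (f u) (f (sh 1 0 u)) (f (sh 1 1 u)) (f (sh 0 1 u)))"

definition isothermic_net :: "('a::euclidean_space) net2 \<Rightarrow> bool" where
  "isothermic_net f \<longleftrightarrow> circular_net f \<and> Koenigs_net f"

definition plane_emb :: "'a::euclidean_space \<Rightarrow> 'a \<Rightarrow> 'a \<Rightarrow> complex \<Rightarrow> 'a" where
  "plane_emb p u v z = p + Re z *\<^sub>R u + Im z *\<^sub>R v"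

text \<open>Cross-ratio of four concircular points, computed after identifying a 2-plane
  containing them with C.\<close>
definition cross_ratio :: "'a::euclidean_space \<Rightarrow> 'a \<Rightarrow> 'a \<Rightarrow> 'a \<Rightarrow> real" where
  "cross_ratio a b c d = (SOME r::real. \<exists>p u v za zb zc zd.
      norm u = 1 \<and> norm v = 1 \<and> inner u v = 0 \<and>
      plane_emb p u v za = a \<and> plane_emb p u v zb = b \<and>
      plane_emb p u v zc = c \<and> plane_emb p u v zd = d \<and>
      complex_of_real r = (za - zb) * inverse (zb - zc) * (zc - zd) * inverse (zd - za))"

definition qfun :: "('a::euclidean_space) net2 \<Rightarrow> int \<times> int \<Rightarrow> real" where
  "qfun f u = cross_ratio (f u) (f (sh 1 0 u)) (f (sh 1 1 u)) (f (sh 0 1 u))"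

end

theory Submission
  imports Defs
begin


definition ar :: "complex \<Rightarrow> complex \<Rightarrow> complex \<Rightarrow> real" where
  "ar a b c = (Re b - Re a) * (Im c - Im a) - (Im b - Im a) * (Re c - Re a)"

lemma par_iff_ar:
  fixes x y :: complex
  assumes "x \<noteq> 0"
  shows "(\<exists>c::real. y = of_real c * x) \<longleftrightarrow> Re x * Im y - Im x * Re y = 0"
proof
  assume "\<exists>c::real. y = of_real c * x"
  then obtain c where "y = of_real c * x" by blast
  then show "Re x * Im y - Im x * Re y = 0" by (simp add: algebra_simps)
next
  assume h: "Re x * Im y - Im x * Re y = 0"
  have n: "(Re x)^2 + (Im x)^2 \<noteq> 0" using assms
    by (metis complex_eq_0 power2_eq_square)
  define c where "c = (Re x * Re y + Im x * Im y) / ((Re x)^2 + (Im x)^2)"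
  have "y = of_real c * x"
  proof (rule complex_eqI)
    show "Re y = Re (complex_of_real c * x)" using n h unfolding c_def
      by (simp add: field_simps power2_eq_square)
    show "Im y = Im (complex_of_real c * x)" using n h unfolding c_def
      by (simp add: field_simps power2_eq_square)
  qed
  then show "\<exists>c::real. y = of_real c * x" by blast
qed

locale onb =
  fixes U V :: "'a::euclidean_space"
  assumes nU: "norm U = 1" and nV: "norm V = 1" and UV: "inner U V = 0"
begin

definition Lin :: "complex \<Rightarrow> 'a" where "Lin z = Re z *\<^sub>R U + Im z *\<^sub>R V"

lemma Lin_add: "Lin (z + w) = Lin z + Lin w" by (simp add: Lin_def algebra_simps)
lemma Lin_diff: "Lin (z - w) = Lin z - Lin w" by (simp add: Lin_def algebra_simps)
lemma Lin_minus: "Lin (- z) = - Lin z" by (simp add: Lin_def algebra_simps)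
lemma Lin_scale: "Lin (of_real r * z) = r *\<^sub>R Lin z" by (simp add: Lin_def algebra_simps)
lemma Lin_zero: "Lin 0 = 0" by (simp add: Lin_def)

lemma UU: "inner U U = 1" using nU by (simp add: dot_square_norm)
lemma VV: "inner V V = 1" using nV by (simp add: dot_square_norm)
lemma VU: "inner V U = 0" using UV by (simp add: inner_commute)

lemma inner_Lin: "inner (Lin z) (Lin w) = Re z * Re w + Im z * Im w"
  by (simp add: Lin_def inner_add_left inner_add_right UU VV UV VU)

lemma norm_Lin: "norm (Lin z) = cmod z"
proof -
  have "(norm (Lin z))^2 = (cmod z)^2"
    unfolding cmod_power2 power2_norm_eq_inner inner_Lin by (simp add: power2_eq_square)
  then show ?thesis by (metis power2_eq_iff_nonneg norm_ge_zero)
qed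

lemma Lin_eq0: "Lin z = 0 \<longleftrightarrow> z = 0"
  by (metis norm_Lin norm_eq_zero)

lemma Lin_inj: "Lin z = Lin w \<longleftrightarrow> z = w"
  by (metis Lin_diff Lin_eq0 eq_iff_diff_eq_0)

definition emb :: "'a \<Rightarrow> complex \<Rightarrow> 'a" where "emb p z = p + Lin z"

lemma emb_diff: "emb p z - emb p w = Lin (z - w)" by (simp add: emb_def Lin_diff)
lemma emb_inj: "emb p z = emb p w \<longleftrightarrow> z = w" by (simp add: emb_def Lin_inj)

lemma col0: "collinear {0, Lin x, Lin y} \<longleftrightarrow> Re x * Im y - Im x * Re y = 0"
proof (cases "x = 0")
  case True then show ?thesis by (simp add: Lin_zero collinear_2)
next
  case False
  have "collinear {0, Lin x, Lin y} \<longleftrightarrow> (y = 0 \<or> (\<exists>c. Lin y = c *\<^sub>R Lin x))"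
    using False by (simp add: collinear_lemma Lin_eq0)
  also have "\<dots> \<longleftrightarrow> (\<exists>c::real. y = of_real c * x)"
    by (metis Lin_inj Lin_scale mult_zero_left of_real_0)
  also have "\<dots> \<longleftrightarrow> Re x * Im y - Im x * Re y = 0" using par_iff_ar[OF False] .
  finally show ?thesis .
qed

lemma col_emb: "collinear {emb p a, emb p b, emb p c} \<longleftrightarrow> ar a b c = 0"
proof -
  have "collinear {emb p a, emb p b, emb p c} \<longleftrightarrow> collinear {0, emb p a - emb p b, emb p c - emb p b}"
    by (rule collinear_3) (simp add: NO_MATCH_def)
  also have "\<dots> \<longleftrightarrow> collinear {0, Lin (a - b), Lin (c - b)}" by (simp add: emb_diff)
  also have "\<dots> \<longleftrightarrow> ar a b c = 0" unfolding col0 ar_def by (auto simp: algebra_simps)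
  finally show ?thesis .
qed

lemma affine_emb: "u + v = 1 \<Longrightarrow> u *\<^sub>R emb p a + v *\<^sub>R emb p b = emb p (a + of_real v * (b - a))"
proof -
  assume "u + v = 1"
  then have u: "u = 1 - v" by simp
  show ?thesis unfolding u emb_def Lin_add Lin_scale Lin_diff by (simp add: algebra_simps)
qed

lemma emb_in_hull: "emb p z \<in> affine hull {p, p + U, p + V}"
proof -
  have "emb p z = (1 - Re z - Im z) *\<^sub>R p + Re z *\<^sub>R (p + U) + Im z *\<^sub>R (p + V)"
    by (simp add: emb_def Lin_def algebra_simps)
  then show ?thesis unfolding affine_hull_3 by (smt (verit) mem_Collect_eq)
qed

lemma aff_dim_emb: "aff_dim {emb p a, emb p b, emb p c, emb p d} \<le> 2"
proof -
  have "aff_dim {emb p a, emb p b, emb p c, emb p d} \<le> aff_dim (affine hull {p, p + U, p + V})"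
    by (rule aff_dim_subset) (simp add: emb_in_hull)
  also have "\<dots> = aff_dim {p, p + U, p + V}" by simp
  also have "\<dots> \<le> of_nat (card {p, p + U, p + V}) - 1" by (rule aff_dim_le_card) simp
  also have "\<dots> \<le> 2"
  proof -
    have "card {p, p + U, p + V} \<le> 3" by (auto simp: card_insert_if)
    then show ?thesis by linarith
  qed
  finally show ?thesis .
qed

end

definition crs :: "complex \<Rightarrow> complex \<Rightarrow> real" where
  "crs x y = Re x * Im y - Im x * Re y"

definition cnondeg :: "complex \<Rightarrow> complex \<Rightarrow> complex \<Rightarrow> complex \<Rightarrow> bool" where
  "cnondeg z0 z1 z2 z3 \<longleftrightarrow> ar z0 z1 z2 \<noteq> 0 \<and> ar z0 z1 z3 \<noteq> 0 \<and> ar z0 z2 z3 \<noteq> 0 \<and>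
     ar z1 z2 z3 \<noteq> 0 \<and> crs (z2 - z0) (z3 - z1) \<noteq> 0"

lemma ar_par: "b - a = of_real r * d \<Longrightarrow> c - a = of_real s * d \<Longrightarrow> ar a b c = 0"
proof -
  assume h1: "b - a = of_real r * d" and h2: "c - a = of_real s * d"
  have "Re b - Re a = r * Re d" "Im b - Im a = r * Im d" using arg_cong[OF h1, of Re] arg_cong[OF h1, of Im] by auto
  moreover have "Re c - Re a = s * Re d" "Im c - Im a = s * Im d" using arg_cong[OF h2, of Re] arg_cong[OF h2, of Im] by auto
  ultimately show ?thesis unfolding ar_def by (simp add: algebra_simps)
qed

lemma ar_neq: "ar a b c \<noteq> 0 \<Longrightarrow> a \<noteq> b \<and> b \<noteq> c \<and> a \<noteq> c"
  by (auto simp: ar_def)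

lemma diag_lemma: "d = of_real v * a - of_real v' * b \<Longrightarrow>
   Re d * Im a - Im d * Re a = v' * (Re a * Im b - Im a * Re b)"
proof -
  assume h: "d = of_real v * a - of_real v' * b"
  have r: "Re d = v * Re a - v' * Re b" and i: "Im d = v * Im a - v' * Im b" using h by auto
  show ?thesis by (simp only: r i) (simp add: algebra_simps)
qed

context onb begin

lemma nondeg_emb: "nondeg_planar_quad (emb p z0) (emb p z1) (emb p z2) (emb p z3) \<longleftrightarrow> cnondeg z0 z1 z2 z3"
proof
  assume H: "nondeg_planar_quad (emb p z0) (emb p z1) (emb p z2) (emb p z3)"
  then have c: "ar z0 z1 z2 \<noteq> 0" "ar z0 z1 z3 \<noteq> 0" "ar z0 z2 z3 \<noteq> 0" "ar z1 z2 z3 \<noteq> 0"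
    unfolding nondeg_planar_quad_def col_emb by auto
  from H obtain X where X1: "X \<in> affine hull {emb p z0, emb p z2}" and X2: "X \<in> affine hull {emb p z1, emb p z3}"
    unfolding nondeg_planar_quad_def by blast
  from X1 obtain u v where uv: "u + v = 1" "X = u *\<^sub>R emb p z0 + v *\<^sub>R emb p z2"
    unfolding affine_hull_2 by blast
  from X2 obtain u' v' where uv': "u' + v' = 1" "X = u' *\<^sub>R emb p z1 + v' *\<^sub>R emb p z3"
    unfolding affine_hull_2 by blast
  have "emb p (z0 + of_real v * (z2 - z0)) = emb p (z1 + of_real v' * (z3 - z1))"
    using uv uv' affine_emb by metis
  then have e: "z0 + of_real v * (z2 - z0) = z1 + of_real v' * (z3 - z1)" by (simp add: emb_inj)
  have "z1 - z0 = of_real v * (z2 - z0) - of_real v' * (z3 - z1)" using e by (simp add: algebra_simps)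
  from diag_lemma[OF this] have "ar z0 z1 z2 = v' * crs (z2 - z0) (z3 - z1)"
    unfolding ar_def crs_def by simp
  then have "crs (z2 - z0) (z3 - z1) \<noteq> 0" using c by auto
  with c show "cnondeg z0 z1 z2 z3" unfolding cnondeg_def by auto
next
  assume C: "cnondeg z0 z1 z2 z3"
  define a where "a = z2 - z0"
  define b where "b = z3 - z1"
  define k where "k = crs a b"
  have k0: "k \<noteq> 0" using C unfolding cnondeg_def k_def a_def b_def by auto
  define s where "s = crs (z1 - z0) b / k"
  define t where "t = crs (z1 - z0) a / k"
  have eq: "z0 + of_real s * a = z1 + of_real t * b"
  proof (rule complex_eqI)
    show "Re (z0 + complex_of_real s * a) = Re (z1 + complex_of_real t * b)"
      using k0 unfolding s_def t_def k_def crs_def by (simp add: field_simps; simp add: algebra_simps)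
    show "Im (z0 + complex_of_real s * a) = Im (z1 + complex_of_real t * b)"
      using k0 unfolding s_def t_def k_def crs_def by (simp add: field_simps; simp add: algebra_simps)
  qed
  define X where "X = emb p (z0 + of_real s * a)"
  have e1: "X = (1 - s) *\<^sub>R emb p z0 + s *\<^sub>R emb p z2"
    unfolding X_def using affine_emb[of "1 - s" s p z0 z2] a_def by simp
  have e2: "X = (1 - t) *\<^sub>R emb p z1 + t *\<^sub>R emb p z3"
    unfolding X_def eq using affine_emb[of "1 - t" t p z1 z3] b_def by simp
  have X1: "X \<in> affine hull {emb p z0, emb p z2}"
    unfolding affine_hull_2 using e1 by (metis (mono_tags, lifting) diff_add_cancel mem_Collect_eq)
  have X2: "X \<in> affine hull {emb p z1, emb p z3}"
    unfolding affine_hull_2 using e2 by (metis (mono_tags, lifting) diff_add_cancel mem_Collect_eq)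
  have n0: "X \<noteq> emb p z0"
  proof
    assume "X = emb p z0"
    then have "z0 = z1 + of_real t * b" using eq by (simp add: X_def emb_inj)
    then have "ar z0 z1 z3 = 0"
      by (intro ar_par[of _ _ "-t" b _ "1 - t"]) (auto simp: b_def algebra_simps)
    then show False using C unfolding cnondeg_def by auto
  qed
  have n1: "X \<noteq> emb p z1"
  proof
    assume "X = emb p z1"
    then have "z1 = z0 + of_real s * a" by (simp add: X_def emb_inj)
    then have "ar z0 z1 z2 = 0"
      by (intro ar_par[of _ _ s a _ 1]) (auto simp: a_def algebra_simps)
    then show False using C unfolding cnondeg_def by auto
  qed
  have n2: "X \<noteq> emb p z2"
  proof
    assume "X = emb p z2"
    then have "z2 = z1 + of_real t * b" using eq by (simp add: X_def emb_inj)
    then have "ar z1 z2 z3 = 0"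
      by (intro ar_par[of _ _ t b _ 1]) (auto simp: b_def algebra_simps)
    then show False using C unfolding cnondeg_def by auto
  qed
  have n3: "X \<noteq> emb p z3"
  proof
    assume "X = emb p z3"
    then have "z3 = z0 + of_real s * a" by (simp add: X_def emb_inj)
    then have "ar z0 z2 z3 = 0"
      by (intro ar_par[of _ _ 1 a _ s]) (auto simp: a_def algebra_simps)
    then show False using C unfolding cnondeg_def by auto
  qed
  have dist: "distinct [emb p z0, emb p z1, emb p z2, emb p z3]"
    using C unfolding cnondeg_def by (auto simp: emb_inj dest!: ar_neq)
  show "nondeg_planar_quad (emb p z0) (emb p z1) (emb p z2) (emb p z3)"
    unfolding nondeg_planar_quad_def col_emb
    using aff_dim_emb dist C X1 X2 n0 n1 n2 n3 unfolding cnondeg_def by blast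
qed

end


lemma cr_real:
  fixes x y z w R :: complex
  assumes "x * cnj x = R" "y * cnj y = R" "z * cnj z = R" "w * cnj w = R" "R \<noteq> 0"
    and "x \<noteq> y" "y \<noteq> z" "z \<noteq> w" "w \<noteq> x"
  shows "cnj ((x - y) * inverse (y - z) * (z - w) * inverse (w - x)) = (x - y) * inverse (y - z) * (z - w) * inverse (w - x)"
proof -
  have nz: "x \<noteq> 0" "y \<noteq> 0" "z \<noteq> 0" "w \<noteq> 0" using assms by auto
  have c: "cnj x = R / x" "cnj y = R / y" "cnj z = R / z" "cnj w = R / w"
    using assms nz by (auto simp: field_simps)
  have d: "y - z \<noteq> 0" "w - x \<noteq> 0" using assms by auto
  have X: "(x - y) * inverse (y - z) * (z - w) * inverse (w - x) = ((x - y) * (z - w)) / ((y - z) * (w - x))"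
    by (simp add: divide_inverse)
  define K where "K = R * R / (x * y * z * w)"
  have K0: "K \<noteq> 0" using nz assms(5) by (simp add: K_def)
  have n: "(R/x - R/y) * (R/z - R/w) = K * ((x - y) * (z - w))"
    unfolding K_def using nz by (simp add: field_simps; simp add: algebra_simps)
  have m: "(R/y - R/z) * (R/w - R/x) = K * ((y - z) * (w - x))"
    unfolding K_def using nz by (simp add: field_simps; simp add: algebra_simps)
  have "cnj (((x - y) * (z - w)) / ((y - z) * (w - x))) = ((R/x - R/y) * (R/z - R/w)) / ((R/y - R/z) * (R/w - R/x))"
    by (simp add: c)
  also have "\<dots> = ((x - y) * (z - w)) / ((y - z) * (w - x))"
    unfolding n m using K0 by simp
  finally show ?thesis unfolding X .
qed

lemma plane_coords:
  fixes A B D :: "'a::euclidean_space"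
  assumes nc: "\<not> collinear {A, B, D}"
  shows "\<exists>U V. onb U V \<and> (\<forall>x \<in> affine hull {A, B, D}. \<exists>z. onb.emb U V A z = x)"
proof -
  have BA: "B \<noteq> A" using nc by (auto simp: collinear_2)
  define U where "U = (1 / norm (B - A)) *\<^sub>R (B - A)"
  define W where "W = D - A"
  define V0 where "V0 = W - inner W U *\<^sub>R U"
  have nU: "norm U = 1" using BA by (simp add: U_def)
  have UU: "inner U U = 1" using nU by (simp add: dot_square_norm)
  have BAU: "B - A = norm (B - A) *\<^sub>R U" using BA by (simp add: U_def)
  have V0: "V0 \<noteq> 0"
  proof
    assume "V0 = 0"
    then have "D - A = (inner W U / norm (B - A)) *\<^sub>R (B - A)"
      using BA unfolding V0_def W_def U_def by simp
    then have "collinear {0, B - A, D - A}" unfolding collinear_lemma by blast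
    then have "collinear {B, A, D}" by (subst collinear_3) (auto simp: NO_MATCH_def)
    then show False using nc by (simp add: insert_commute)
  qed
  define V where "V = (1 / norm V0) *\<^sub>R V0"
  have nV: "norm V = 1" using V0 by (simp add: V_def)
  have UV0: "inner U V0 = 0" unfolding V0_def by (simp add: inner_diff_right UU inner_commute)
  have UV: "inner U V = 0" by (simp add: V_def UV0)
  have V0V: "V0 = norm V0 *\<^sub>R V" using V0 by (simp add: V_def)
  interpret onb U V using nU nV UV by unfold_locales
  have LB: "Lin (Complex (norm (B - A)) 0) = B - A" using BAU by (simp add: Lin_def)
  have LD: "Lin (Complex (inner W U) (norm V0)) = D - A"
  proof -
    have "Lin (Complex (inner W U) (norm V0)) = inner W U *\<^sub>R U + norm V0 *\<^sub>R V" by (simp add: Lin_def)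
    also have "\<dots> = inner W U *\<^sub>R U + V0" using V0V by simp
    also have "\<dots> = D - A" by (simp add: V0_def W_def)
    finally show ?thesis .
  qed
  have "\<forall>x \<in> affine hull {A, B, D}. \<exists>z. emb A z = x"
  proof
    fix x assume "x \<in> affine hull {A, B, D}"
    then obtain u v w where uvw: "u + v + w = 1" "x = u *\<^sub>R A + v *\<^sub>R B + w *\<^sub>R D"
      unfolding affine_hull_3 by blast
    have "emb A (of_real v * Complex (norm (B - A)) 0 + of_real w * Complex (inner W U) (norm V0)) = x"
    proof -
      have "emb A (of_real v * Complex (norm (B - A)) 0 + of_real w * Complex (inner W U) (norm V0))
          = A + v *\<^sub>R (B - A) + w *\<^sub>R (D - A)"
        by (simp add: emb_def Lin_add Lin_scale LB LD)
      also have "\<dots> = x"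
      proof -
        have u: "u = 1 - v - w" using uvw(1) by simp
        show ?thesis unfolding uvw(2) u by (simp add: algebra_simps)
      qed
      finally show ?thesis .
    qed
    then show "\<exists>z. emb A z = x" by blast
  qed
  then show ?thesis using nU nV UV by (meson onb.intro)
qed

lemma plane_emb_eq: "onb u v \<Longrightarrow> plane_emb p u v z = onb.emb u v p z"
  by (simp add: plane_emb_def onb.emb_def onb.Lin_def add.assoc)

lemma quad_emb:
  fixes A B C D :: "'a::euclidean_space"
  assumes nd: "nondeg_planar_quad A B C D" and cc: "concircular A B C D"
  shows "\<exists>U V p z0 z1 z2 z3. onb U V \<and> A = onb.emb U V p z0 \<and> B = onb.emb U V p z1 \<and>
     C = onb.emb U V p z2 \<and> D = onb.emb U V p z3 \<and>
     complex_of_real (cross_ratio A B C D) = (z0 - z1) * inverse (z1 - z2) * (z2 - z3) * inverse (z3 - z0)"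
proof -
  have nc: "\<not> collinear {A, B, D}" using nd unfolding nondeg_planar_quad_def by auto
  have dst: "distinct [A, B, C, D]" using nd unfolding nondeg_planar_quad_def by auto
  have ad: "aff_dim {A, B, C, D} \<le> 2" using nd unfolding nondeg_planar_quad_def by auto
  have set: "{A, B, C, D} = insert C {A, B, D}" by auto
  have ad3: "\<not> aff_dim {A, B, D} \<le> 1" using nc collinear_aff_dim by blast
  have Chull: "C \<in> affine hull {A, B, D}"
  proof (rule ccontr)
    assume "C \<notin> affine hull {A, B, D}"
    then have "aff_dim {A, B, C, D} = aff_dim {A, B, D} + 1" unfolding set aff_dim_insert by simp
    then show False using ad ad3 by linarith
  qed
  have hulleq: "affine hull {A, B, C, D} = affine hull {A, B, D}"
    unfolding set using Chull by (rule hull_redundant)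
  from cc obtain c r where c: "c \<in> affine hull {A, B, C, D}" "dist A c = r" "dist B c = r" "dist C c = r" "dist D c = r"
    unfolding concircular_def by blast
  from plane_coords[OF nc] obtain U V where oUV: "onb U V"
    and cov: "\<forall>x \<in> affine hull {A, B, D}. \<exists>z. onb.emb U V A z = x" by blast
  interpret onb U V by (rule oUV)
  have hA: "A \<in> affine hull {A, B, D}" "B \<in> affine hull {A, B, D}" "D \<in> affine hull {A, B, D}"
    by (auto intro: hull_inc)
  obtain z0 where z0: "emb A z0 = A" using cov hA by blast
  obtain z1 where z1: "emb A z1 = B" using cov hA by blast
  obtain z2 where z2: "emb A z2 = C" using cov Chull by blast
  obtain z3 where z3: "emb A z3 = D" using cov hA by blast
  obtain zc where zc: "emb A zc = c" using cov c(1) hulleq by blast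
  have dist_emb: "\<And>z w. dist (emb A z) (emb A w) = cmod (z - w)"
    by (simp add: dist_norm emb_diff norm_Lin)
  have r: "cmod (z0 - zc) = r" "cmod (z1 - zc) = r" "cmod (z2 - zc) = r" "cmod (z3 - zc) = r"
    using c dist_emb z0 z1 z2 z3 zc by metis+
  have zd: "z0 \<noteq> z1" "z1 \<noteq> z2" "z2 \<noteq> z3" "z3 \<noteq> z0" using dst z0 z1 z2 z3 by auto
  have r0: "r \<noteq> 0" using r zd by auto
  define R where "R = complex_of_real (r^2)"
  have R0: "R \<noteq> 0" using r0 by (simp add: R_def)
  have sq: "\<And>x. cmod x = r \<Longrightarrow> x * cnj x = R" unfolding R_def by (metis complex_norm_square)
  have real: "cnj (((z0 - zc) - (z1 - zc)) * inverse ((z1 - zc) - (z2 - zc)) * ((z2 - zc) - (z3 - zc)) * inverse ((z3 - zc) - (z0 - zc)))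
     = ((z0 - zc) - (z1 - zc)) * inverse ((z1 - zc) - (z2 - zc)) * ((z2 - zc) - (z3 - zc)) * inverse ((z3 - zc) - (z0 - zc))"
    by (rule cr_real[OF sq[OF r(1)] sq[OF r(2)] sq[OF r(3)] sq[OF r(4)] R0]) (use zd in auto)
  define X where "X = (z0 - z1) * inverse (z1 - z2) * (z2 - z3) * inverse (z3 - z0)"
  have cX: "cnj X = X" using real unfolding X_def by simp
  have XR: "X = complex_of_real (Re X)"
  proof (rule complex_eqI)
    have "Im (cnj X) = Im X" using cX by simp
    then show "Im X = Im (complex_of_real (Re X))" by simp
  qed simp
  have emb_eq: "\<And>z. plane_emb A U V z = emb A z" using plane_emb_eq[OF oUV] .
  have "\<exists>r::real. \<exists>p u v za zb zc zd.
      norm u = 1 \<and> norm v = 1 \<and> inner u v = 0 \<and>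
      plane_emb p u v za = A \<and> plane_emb p u v zb = B \<and>
      plane_emb p u v zc = C \<and> plane_emb p u v zd = D \<and>
      complex_of_real r = (za - zb) * inverse (zb - zc) * (zc - zd) * inverse (zd - za)"
    apply (rule exI[of _ "Re X"], rule exI[of _ A], rule exI[of _ U], rule exI[of _ V])
    apply (rule exI[of _ z0], rule exI[of _ z1], rule exI[of _ z2], rule exI[of _ z3])
    using nU nV UV z0 z1 z2 z3 emb_eq XR[symmetric] X_def[symmetric] by simp
  from someI_ex[OF this] obtain p u v za zb zc' zd where
    W: "norm u = 1" "norm v = 1" "inner u v = 0"
      "plane_emb p u v za = A" "plane_emb p u v zb = B" "plane_emb p u v zc' = C" "plane_emb p u v zd = D"
      "complex_of_real (cross_ratio A B C D) = (za - zb) * inverse (zb - zc') * (zc' - zd) * inverse (zd - za)"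
    unfolding cross_ratio_def by blast
  have o: "onb u v" using W by (simp add: onb_def)
  show ?thesis
    apply (rule exI[of _ u], rule exI[of _ v], rule exI[of _ p])
    apply (rule exI[of _ za], rule exI[of _ zb], rule exI[of _ zc'], rule exI[of _ zd])
    using o W plane_emb_eq[OF o] by auto
qed



lemma crs_scale: "crs (of_real a * u) (of_real b * v) = a * b * crs u v"
  by (simp add: crs_def algebra_simps)
lemma crs_add1: "crs (u + u') v = crs u v + crs u' v" by (simp add: crs_def algebra_simps)
lemma crs_add2: "crs u (v + v') = crs u v + crs u v'" by (simp add: crs_def algebra_simps)
lemma crs_minus1: "crs (- u) v = - crs u v" by (simp add: crs_def algebra_simps)
lemma crs_minus2: "crs u (- v) = - crs u v" by (simp add: crs_def algebra_simps)
lemma crs_self: "crs u u = 0" by (simp add: crs_def algebra_simps)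
lemma crs_anti: "crs u v = - crs v u" by (simp add: crs_def algebra_simps)
lemma ar_crs: "ar a b c = crs (b - a) (c - a)" by (simp add: ar_def crs_def)

lemma indep:
  assumes "of_real a * u = of_real b * v" "crs u v \<noteq> 0"
  shows "a = 0 \<and> b = 0"
proof -
  have r: "a * Re u = b * Re v" "a * Im u = b * Im v"
    using arg_cong[OF assms(1), of Re] arg_cong[OF assms(1), of Im] by auto
  have "a * crs u v = (a * Re u) * Im v - (a * Im u) * Re v" by (simp add: crs_def algebra_simps)
  also have "\<dots> = 0" unfolding r by (simp add: algebra_simps)
  finally have a: "a = 0" using assms(2) by simp
  have "b * crs u v = Re u * (b * Im v) - Im u * (b * Re v)" by (simp add: crs_def algebra_simps)
  also have "\<dots> = 0" unfolding r[symmetric] by (simp add: algebra_simps)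
  finally have b: "b = 0" using assms(2) by simp
  show ?thesis using a b by simp
qed

lemma cinv: "x \<noteq> 0 \<Longrightarrow> cnj (1 / (of_real k * x)) = of_real (1 / (k * (cmod x)^2)) * x"
proof -
  assume x: "x \<noteq> 0"
  have "of_real ((cmod x)^2) = x * cnj x" by (rule complex_norm_square)
  then show ?thesis using x
    by (cases "k = 0") (simp_all add: field_simps)
qed

lemma divcnj: "d \<noteq> 0 \<Longrightarrow> - of_real r / cnj d = of_real (- r / (cmod d)^2) * d"
proof -
  assume d: "d \<noteq> 0"
  have e: "of_real (- r / (cmod d)^2) = - of_real r / (d * cnj d)"
    by (simp add: complex_norm_square[symmetric])
  have "cnj d \<noteq> 0" using d by simp
  then show ?thesis unfolding e using d by (simp add: field_simps)
qed

locale cq =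
  fixes x1 x2 x3 x4 :: complex and q :: real
  assumes sum0: "x1 + x2 + x3 + x4 = 0"
    and nz: "x1 \<noteq> 0" "x2 \<noteq> 0" "x3 \<noteq> 0" "x4 \<noteq> 0"
    and hq: "of_real q = x1 * x3 / (x2 * x4)"
begin

lemma q0: "q \<noteq> 0" using hq nz by auto

lemma x4e: "x4 = - (x1 + x2 + x3)" using sum0 by (simp add: algebra_simps eq_neg_iff_add_eq_0)

lemma iq2: "1 / (of_real q * x2) = x4 / (x1 * x3)" using nz q0 by (simp add: hq field_simps)
lemma iq4: "1 / (of_real q * x4) = x2 / (x1 * x3)" using nz q0 by (simp add: hq field_simps)

definition k1 where "k1 = 1 / (cmod x1)^2"
definition k2 where "k2 = 1 / (q * (cmod x2)^2)"
definition k3 where "k3 = 1 / (cmod x3)^2"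
definition k4 where "k4 = 1 / (q * (cmod x4)^2)"

lemma kw1: "of_real k1 * x1 = cnj (1 / x1)" using cinv[OF nz(1), of 1] by (simp add: k1_def)
lemma kw2: "of_real k2 * x2 = cnj (1 / (of_real q * x2))" using cinv[OF nz(2), of q] by (simp add: k2_def)
lemma kw3: "of_real k3 * x3 = cnj (1 / x3)" using cinv[OF nz(3), of 1] by (simp add: k3_def)
lemma kw4: "of_real k4 * x4 = cnj (1 / (of_real q * x4))" using cinv[OF nz(4), of q] by (simp add: k4_def)

lemma k_nz: "k1 \<noteq> 0" "k2 \<noteq> 0" "k3 \<noteq> 0" "k4 \<noteq> 0"
  using nz q0 by (auto simp: k1_def k2_def k3_def k4_def)

lemma CK1: "of_real k1 * x1 + of_real k2 * x2 + of_real k3 * x3 + of_real k4 * x4 = 0"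
proof -
  have "1 / x1 + 1 / (of_real q * x2) + 1 / x3 + 1 / (of_real q * x4) = (x1 + x2 + x3 + x4) / (x1 * x3)"
    unfolding iq2 iq4 using nz by (simp add: field_simps)
  also have "\<dots> = 0" using sum0 by simp
  finally have "cnj (1 / x1 + 1 / (of_real q * x2) + 1 / x3 + 1 / (of_real q * x4)) = 0" by simp
  then show ?thesis unfolding kw1 kw2 kw3 kw4 by simp
qed

definition Z where "Z = (x1 + x2) * (x2 + x3) / (x1 * x3)"

lemma Zreal: "cnj Z = Z"
proof -
  have qc: "of_real q = cnj x1 * cnj x3 / (cnj x2 * cnj x4)"
    using arg_cong[OF hq, of cnj] by simp
  have nzc: "cnj x1 \<noteq> 0" "cnj x2 \<noteq> 0" "cnj x3 \<noteq> 0" "cnj x4 \<noteq> 0" using nz by auto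
  have P: "x1 * x3 * (cnj x2 * cnj x4) = cnj x1 * cnj x3 * (x2 * x4)"
    using hq qc nz nzc by (simp add: field_simps)
  have y4: "cnj x4 = - (cnj x1 + cnj x2 + cnj x3)" using x4e by simp
  have id: "(cnj x1 + cnj x2) * (cnj x2 + cnj x3) * (x1 * x3) - (x1 + x2) * (x2 + x3) * (cnj x1 * cnj x3)
     = - (x1 * x3 * (cnj x2 * cnj x4) - cnj x1 * cnj x3 * (x2 * x4))"
    unfolding y4 x4e by (simp add: algebra_simps)
  have "(cnj x1 + cnj x2) * (cnj x2 + cnj x3) * (x1 * x3) = (x1 + x2) * (x2 + x3) * (cnj x1 * cnj x3)"
    using id P by simp
  then show ?thesis unfolding Z_def using nz nzc by (simp add: field_simps)
qed

lemma ZR: "Z = of_real (Re Z)"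
proof (rule complex_eqI)
  have "Im (cnj Z) = Im Z" using Zreal by simp
  then show "Im Z = Im (complex_of_real (Re Z))" by simp
qed simp

lemma CK2a:
  assumes "x2 + x3 \<noteq> 0"
  shows "of_real k1 * x1 + of_real k2 * x2 = of_real (- Re Z / (cmod (x2 + x3))^2) * (x2 + x3)"
proof -
  define d where "d = x2 + x3"
  have h1: "1 / x1 + 1 / (of_real q * x2) = - ((x1 + x2) / (x1 * x3))"
    unfolding iq2 x4e using nz by (simp add: field_simps; simp add: algebra_simps)
  have h2: "Z = (x1 + x2) / (x1 * x3) * d" unfolding Z_def d_def by simp
  have S: "1 / x1 + 1 / (of_real q * x2) = - Z / d"
    unfolding h1 h2 using assms d_def by simp
  have "of_real k1 * x1 + of_real k2 * x2 = cnj (- Z / d)" unfolding kw1 kw2 S[symmetric] by simp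
  also have "\<dots> = - of_real (Re Z) / cnj d" using ZR Zreal by simp
  also have "\<dots> = of_real (- Re Z / (cmod d)^2) * d"
    using divcnj assms d_def by blast
  finally show ?thesis unfolding d_def .
qed

lemma CK2b:
  assumes "x1 + x2 \<noteq> 0"
  shows "of_real k2 * x2 + of_real k3 * x3 = of_real (- Re Z / (cmod (x1 + x2))^2) * (x1 + x2)"
proof -
  define d where "d = x1 + x2"
  have h1: "1 / (of_real q * x2) + 1 / x3 = - ((x2 + x3) / (x1 * x3))"
    unfolding iq2 x4e using nz by (simp add: field_simps; simp add: algebra_simps)
  have h2: "Z = (x2 + x3) / (x1 * x3) * d" unfolding Z_def d_def by simp
  have S: "1 / (of_real q * x2) + 1 / x3 = - Z / d"
    unfolding h1 h2 using assms d_def by simp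
  have "of_real k2 * x2 + of_real k3 * x3 = cnj (- Z / d)" unfolding kw3 kw2 S[symmetric] by simp
  also have "\<dots> = - of_real (Re Z) / cnj d" using ZR Zreal by simp
  also have "\<dots> = of_real (- Re Z / (cmod d)^2) * d"
    using divcnj assms d_def by blast
  finally show ?thesis unfolding d_def .
qed

lemma lincomb: "A = B \<Longrightarrow> C = D \<Longrightarrow> X - Y = (A - B) - l * (C - D) \<Longrightarrow> X = (Y::complex)"
  by simp

lemma CK3:
  assumes n23: "crs x2 (x2 + x3) \<noteq> 0" and n31: "crs x3 (x1 + x2) \<noteq> 0"
    and s1: "x2 + x3 \<noteq> 0" and s2: "x1 + x2 \<noteq> 0"
    and E1: "of_real c1 * x1 + of_real c2 * x2 + of_real c3 * x3 + of_real c4 * x4 = 0"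
    and E2: "of_real c1 * x1 + of_real c2 * x2 = of_real c5 * (x2 + x3)"
    and E3: "of_real c2 * x2 + of_real c3 * x3 = of_real c6 * (x1 + x2)"
  shows "\<exists>l. c1 = l * k1 \<and> c2 = l * k2 \<and> c3 = l * k3 \<and> c4 = l * k4"
proof -
  define l where "l = c1 / k1"
  have h1: "c1 = l * k1" using k_nz by (simp add: l_def)
  define C5 where "C5 = - Re Z / (cmod (x2 + x3))^2"
  define C6 where "C6 = - Re Z / (cmod (x1 + x2))^2"
  have K2a: "of_real k1 * x1 + of_real k2 * x2 = of_real C5 * (x2 + x3)" using CK2a[OF s1] C5_def by simp
  have K2b: "of_real k2 * x2 + of_real k3 * x3 = of_real C6 * (x1 + x2)" using CK2b[OF s2] C6_def by simp
  have "of_real (c2 - l * k2) * x2 = of_real (c5 - l * C5) * (x2 + x3)"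
    by (rule lincomb[OF E2 K2a, of _ _ "of_real l"]) (simp add: h1 algebra_simps)
  from indep[OF this n23] have h2: "c2 = l * k2" by simp
  have "of_real (c3 - l * k3) * x3 = of_real (c6 - l * C6) * (x1 + x2)"
    by (rule lincomb[OF E3 K2b, of _ _ "of_real l"]) (simp add: h2 algebra_simps)
  from indep[OF this n31] have h3: "c3 = l * k3" by simp
  have "of_real (c4 - l * k4) * x4 = of_real 0 * x4"
    by (rule lincomb[OF E1 CK1, of _ _ "of_real l"]) (simp add: h1 h2 h3 algebra_simps)
  then have "complex_of_real (c4 - l * k4) = 0" using nz(4) by simp
  then have h4: "c4 = l * k4" by (simp only: of_real_eq_0_iff)
  show ?thesis using h1 h2 h3 h4 by blast
qed


lemma CK4:
  assumes n12: "crs x1 x2 \<noteq> 0" and n23: "crs x2 x3 \<noteq> 0" and n34: "crs x3 x4 \<noteq> 0"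
    and n41: "crs x4 x1 \<noteq> 0" and dg: "crs (x1 + x2) (x2 + x3) \<noteq> 0"
    and s1: "x2 + x3 \<noteq> 0" and s2: "x1 + x2 \<noteq> 0" and mu: "\<mu> \<noteq> 0"
  shows "cnondeg 0 (of_real (\<mu> * k1) * x1) (of_real (\<mu> * k1) * x1 + of_real (\<mu> * k2) * x2) (- (of_real (\<mu> * k4) * x4))"
proof -
  define W1 where "W1 = of_real (\<mu> * k1) * x1"
  define W2 where "W2 = of_real (\<mu> * k2) * x2"
  define W3 where "W3 = of_real (\<mu> * k3) * x3"
  define W4 where "W4 = of_real (\<mu> * k4) * x4"
  have sW: "W1 + W2 + W3 + W4 = 0"
  proof -
    have "W1 + W2 + W3 + W4 = of_real \<mu> * (of_real k1 * x1 + of_real k2 * x2 + of_real k3 * x3 + of_real k4 * x4)"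
      unfolding W1_def W2_def W3_def W4_def by (simp add: algebra_simps)
    then show ?thesis using CK1 by simp
  qed
  have kk: "\<mu> * k1 \<noteq> 0" "\<mu> * k2 \<noteq> 0" "\<mu> * k3 \<noteq> 0" "\<mu> * k4 \<noteq> 0" using k_nz mu by auto
  have a1: "ar 0 W1 (W1 + W2) = (\<mu> * k1) * (\<mu> * k2) * crs x1 x2"
    unfolding ar_crs W1_def W2_def by (simp only: diff_zero add_diff_cancel_left' crs_add1 crs_add2 crs_minus1 crs_minus2 crs_self crs_scale; simp)
  have a2: "ar 0 W1 (- W4) = - ((\<mu> * k1) * (\<mu> * k4) * crs x1 x4)"
    unfolding ar_crs W1_def W4_def by (simp only: diff_zero add_diff_cancel_left' crs_add1 crs_add2 crs_minus1 crs_minus2 crs_self crs_scale; simp)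
  have W4e: "W4 = - (W1 + W2 + W3)" using sW by (metis add.commute eq_neg_iff_add_eq_0)
  have e3: "W1 + W2 = - (W3 + W4)" unfolding W4e by simp
  have a3: "ar 0 (W1 + W2) (- W4) = (\<mu> * k3) * (\<mu> * k4) * crs x3 x4"
    unfolding ar_crs e3 W3_def W4_def by (simp only: diff_zero add_diff_cancel_left' crs_add1 crs_add2 crs_minus1 crs_minus2 crs_self crs_scale; simp)
  have e4: "- W4 - W1 = W2 + W3" unfolding W4e by simp
  have a4: "ar W1 (W1 + W2) (- W4) = (\<mu> * k2) * (\<mu> * k3) * crs x2 x3"
    unfolding ar_crs e4 W2_def W3_def by (simp only: diff_zero add_diff_cancel_left' crs_add1 crs_add2 crs_minus1 crs_minus2 crs_self crs_scale; simp)
  define C5 where "C5 = - Re Z / (cmod (x2 + x3))^2"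
  define C6 where "C6 = - Re Z / (cmod (x1 + x2))^2"
  have Z0: "Z \<noteq> 0" using nz s1 s2 by (simp add: Z_def)
  have RZ: "Re Z \<noteq> 0" using Z0 ZR by (metis of_real_0)
  have C56: "C5 \<noteq> 0" "C6 \<noteq> 0" using RZ s1 s2 by (simp_all add: C5_def C6_def)
  have w12: "W1 + W2 = of_real (\<mu> * C5) * (x2 + x3)"
  proof -
    have "W1 + W2 = of_real \<mu> * (of_real k1 * x1 + of_real k2 * x2)"
      unfolding W1_def W2_def by (simp add: algebra_simps)
    then show ?thesis using CK2a[OF s1] C5_def by simp
  qed
  have w23: "W2 + W3 = of_real (\<mu> * C6) * (x1 + x2)"
  proof -
    have "W2 + W3 = of_real \<mu> * (of_real k2 * x2 + of_real k3 * x3)"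
      unfolding W2_def W3_def by (simp add: algebra_simps)
    then show ?thesis using CK2b[OF s2] C6_def by simp
  qed
  have a5: "crs (W1 + W2 - 0) (- W4 - W1) = (\<mu> * C5) * (\<mu> * C6) * crs (x2 + x3) (x1 + x2)"
    unfolding e4 w12 w23 by (simp only: diff_zero add_diff_cancel_left' crs_add1 crs_add2 crs_minus1 crs_minus2 crs_self crs_scale; simp)
  have dg': "crs (x2 + x3) (x1 + x2) \<noteq> 0" using dg by (metis crs_anti neg_equal_0_iff_equal)
  have n14: "crs x1 x4 \<noteq> 0" using n41 by (metis crs_anti neg_equal_0_iff_equal)
  show ?thesis unfolding cnondeg_def W1_def[symmetric] W2_def[symmetric] W4_def[symmetric]
    using a1 a2 a3 a4 a5 kk n12 n14 n34 n23 dg' C56 mu by simp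
qed

end


lemma local_quad:
  fixes A B C D :: "'a::euclidean_space"
  assumes nd: "nondeg_planar_quad A B C D" and cc: "concircular A B C D"
  shows "cross_ratio A B C D \<noteq> 0 \<and>
    (1/(norm(B-A))^2) *\<^sub>R (B-A) + (1/(cross_ratio A B C D*(norm(C-B))^2)) *\<^sub>R (C-B)
      + (1/(norm(D-C))^2) *\<^sub>R (D-C) + (1/(cross_ratio A B C D*(norm(A-D))^2)) *\<^sub>R (A-D) = 0 \<and>
    (\<exists>c. (1/(norm(B-A))^2) *\<^sub>R (B-A) + (1/(cross_ratio A B C D*(norm(C-B))^2)) *\<^sub>R (C-B) = c *\<^sub>R (D-B)) \<and>
    (\<exists>c. (1/(cross_ratio A B C D*(norm(C-B))^2)) *\<^sub>R (C-B) + (1/(norm(D-C))^2) *\<^sub>R (D-C) = c *\<^sub>R (C-A)) \<and>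
    (\<forall>c1 c2 c3 c4 c5 c6. c1 *\<^sub>R (B-A) + c2 *\<^sub>R (C-B) + c3 *\<^sub>R (D-C) + c4 *\<^sub>R (A-D) = 0 \<and>
        c1 *\<^sub>R (B-A) + c2 *\<^sub>R (C-B) = c5 *\<^sub>R (D-B) \<and> c2 *\<^sub>R (C-B) + c3 *\<^sub>R (D-C) = c6 *\<^sub>R (C-A) \<longrightarrow>
      (\<exists>l. c1 = l * (1/(norm(B-A))^2) \<and> c2 = l * (1/(cross_ratio A B C D*(norm(C-B))^2)) \<and>
           c3 = l * (1/(norm(D-C))^2) \<and> c4 = l * (1/(cross_ratio A B C D*(norm(A-D))^2)))) \<and>
    (\<forall>P \<mu>. \<mu> \<noteq> 0 \<longrightarrow> nondeg_planar_quad P (P + (\<mu> * (1/(norm(B-A))^2)) *\<^sub>R (B-A))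
        (P + (\<mu> * (1/(norm(B-A))^2)) *\<^sub>R (B-A) + (\<mu> * (1/(cross_ratio A B C D*(norm(C-B))^2))) *\<^sub>R (C-B))
        (P - (\<mu> * (1/(cross_ratio A B C D*(norm(A-D))^2))) *\<^sub>R (A-D)))"
proof -
  obtain U V p z0 z1 z2 z3 where o: "onb U V" and e: "A = onb.emb U V p z0" "B = onb.emb U V p z1"
     "C = onb.emb U V p z2" "D = onb.emb U V p z3"
    and hq0: "complex_of_real (cross_ratio A B C D) = (z0 - z1) * inverse (z1 - z2) * (z2 - z3) * inverse (z3 - z0)"
    using quad_emb[OF nd cc] by blast
  interpret onb U V by (rule o)
  define q where "q = cross_ratio A B C D"
  define x1 where "x1 = z1 - z0"
  define x2 where "x2 = z2 - z1"
  define x3 where "x3 = z3 - z2"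
  define x4 where "x4 = z0 - z3"
  have cn: "cnondeg z0 z1 z2 z3" using nd e nondeg_emb by simp
  have zd: "z0 \<noteq> z1" "z1 \<noteq> z2" "z2 \<noteq> z3" "z3 \<noteq> z0" "z0 \<noteq> z2" "z1 \<noteq> z3"
    using cn unfolding cnondeg_def by (auto dest!: ar_neq)
  have hq: "complex_of_real q = x1 * x3 / (x2 * x4)"
  proof -
    have a: "z0 - z1 = - x1" "z1 - z2 = - x2" "z2 - z3 = - x3" "z3 - z0 = - x4"
      by (simp_all add: x1_def x2_def x3_def x4_def)
    show ?thesis unfolding q_def hq0 a by (simp add: divide_inverse)
  qed
  interpret cq x1 x2 x3 x4 q
    by unfold_locales (use zd hq in \<open>auto simp: x1_def x2_def x3_def x4_def\<close>)
  have L: "B - A = Lin x1" "C - B = Lin x2" "D - C = Lin x3" "A - D = Lin x4"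
     "D - B = Lin (x2 + x3)" "C - A = Lin (x1 + x2)"
    unfolding e emb_diff x1_def x2_def x3_def x4_def by (simp_all add: algebra_simps)
  have N: "norm (B - A) = cmod x1" "norm (C - B) = cmod x2" "norm (D - C) = cmod x3" "norm (A - D) = cmod x4"
    unfolding L norm_Lin by simp_all
  have K: "1/(norm(B-A))^2 = k1" "1/(q*(norm(C-B))^2) = k2" "1/(norm(D-C))^2 = k3" "1/(q*(norm(A-D))^2) = k4"
    unfolding N k1_def k2_def k3_def k4_def by simp_all
  have cz: "\<And>a b c. ar a b c = crs (b - a) (c - a)" by (rule ar_crs)
  have n12: "crs x1 x2 \<noteq> 0" using cn unfolding cnondeg_def x1_def x2_def by (simp add: ar_def crs_def algebra_simps)
  have n23: "crs x2 x3 \<noteq> 0" using cn unfolding cnondeg_def x2_def x3_def by (simp add: ar_def crs_def algebra_simps)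
  have n23': "crs x2 (x2 + x3) \<noteq> 0" using cn unfolding cnondeg_def x2_def x3_def by (simp add: ar_def crs_def algebra_simps)
  have n34: "crs x3 x4 \<noteq> 0" using cn unfolding cnondeg_def x3_def x4_def by (simp add: ar_def crs_def algebra_simps)
  have n41: "crs x4 x1 \<noteq> 0" using cn unfolding cnondeg_def x4_def x1_def by (simp add: ar_def crs_def algebra_simps)
  have n31: "crs x3 (x1 + x2) \<noteq> 0" using cn unfolding cnondeg_def x1_def x2_def x3_def by (simp add: ar_def crs_def algebra_simps)
  have dg: "crs (x1 + x2) (x2 + x3) \<noteq> 0" using cn unfolding cnondeg_def x1_def x2_def x3_def by (simp add: crs_def algebra_simps)
  have s1: "x2 + x3 \<noteq> 0" using zd unfolding x2_def x3_def by simp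
  have s2: "x1 + x2 \<noteq> 0" using zd unfolding x1_def x2_def by simp
  have V1: "k1 *\<^sub>R (B-A) + k2 *\<^sub>R (C-B) + k3 *\<^sub>R (D-C) + k4 *\<^sub>R (A-D) = 0"
  proof -
    have "k1 *\<^sub>R (B-A) + k2 *\<^sub>R (C-B) + k3 *\<^sub>R (D-C) + k4 *\<^sub>R (A-D)
        = Lin (of_real k1 * x1 + of_real k2 * x2 + of_real k3 * x3 + of_real k4 * x4)"
      unfolding L Lin_add Lin_scale ..
    then show ?thesis using CK1 Lin_zero by simp
  qed
  have V2a: "\<exists>c. k1 *\<^sub>R (B-A) + k2 *\<^sub>R (C-B) = c *\<^sub>R (D-B)"
  proof -
    have "k1 *\<^sub>R (B-A) + k2 *\<^sub>R (C-B) = Lin (of_real k1 * x1 + of_real k2 * x2)"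
      unfolding L Lin_add Lin_scale ..
    also have "\<dots> = (- Re Z / (cmod (x2 + x3))^2) *\<^sub>R (D - B)" unfolding CK2a[OF s1] Lin_scale L ..
    finally show ?thesis by blast
  qed
  have V2b: "\<exists>c. k2 *\<^sub>R (C-B) + k3 *\<^sub>R (D-C) = c *\<^sub>R (C-A)"
  proof -
    have "k2 *\<^sub>R (C-B) + k3 *\<^sub>R (D-C) = Lin (of_real k2 * x2 + of_real k3 * x3)"
      unfolding L Lin_add Lin_scale ..
    also have "\<dots> = (- Re Z / (cmod (x1 + x2))^2) *\<^sub>R (C - A)" unfolding CK2b[OF s2] Lin_scale L ..
    finally show ?thesis by blast
  qed
  have V3: "\<forall>c1 c2 c3 c4 c5 c6. c1 *\<^sub>R (B-A) + c2 *\<^sub>R (C-B) + c3 *\<^sub>R (D-C) + c4 *\<^sub>R (A-D) = 0 \<and>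
        c1 *\<^sub>R (B-A) + c2 *\<^sub>R (C-B) = c5 *\<^sub>R (D-B) \<and> c2 *\<^sub>R (C-B) + c3 *\<^sub>R (D-C) = c6 *\<^sub>R (C-A) \<longrightarrow>
      (\<exists>l. c1 = l * k1 \<and> c2 = l * k2 \<and> c3 = l * k3 \<and> c4 = l * k4)"
  proof (intro allI impI)
    fix c1 c2 c3 c4 c5 c6 :: real
    assume H: "c1 *\<^sub>R (B-A) + c2 *\<^sub>R (C-B) + c3 *\<^sub>R (D-C) + c4 *\<^sub>R (A-D) = 0 \<and>
        c1 *\<^sub>R (B-A) + c2 *\<^sub>R (C-B) = c5 *\<^sub>R (D-B) \<and> c2 *\<^sub>R (C-B) + c3 *\<^sub>R (D-C) = c6 *\<^sub>R (C-A)"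
    have E1: "of_real c1 * x1 + of_real c2 * x2 + of_real c3 * x3 + of_real c4 * x4 = 0"
      using H unfolding L Lin_scale[symmetric] Lin_add[symmetric] Lin_zero[symmetric] Lin_inj by blast
    have E2: "of_real c1 * x1 + of_real c2 * x2 = of_real c5 * (x2 + x3)"
      using H unfolding L Lin_scale[symmetric] Lin_add[symmetric] Lin_inj by blast
    have E3: "of_real c2 * x2 + of_real c3 * x3 = of_real c6 * (x1 + x2)"
      using H unfolding L Lin_scale[symmetric] Lin_add[symmetric] Lin_inj by blast
    show "\<exists>l. c1 = l * k1 \<and> c2 = l * k2 \<and> c3 = l * k3 \<and> c4 = l * k4"
      by (rule CK3[OF n23' n31 s1 s2 E1 E2 E3])
  qed
  have V4: "\<forall>P \<mu>. \<mu> \<noteq> 0 \<longrightarrow> nondeg_planar_quad P (P + (\<mu> * k1) *\<^sub>R (B-A))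
        (P + (\<mu> * k1) *\<^sub>R (B-A) + (\<mu> * k2) *\<^sub>R (C-B)) (P - (\<mu> * k4) *\<^sub>R (A-D))"
  proof (intro allI impI)
    fix P and \<mu> :: real
    assume mu: "\<mu> \<noteq> 0"
    have c4: "cnondeg 0 (of_real (\<mu> * k1) * x1) (of_real (\<mu> * k1) * x1 + of_real (\<mu> * k2) * x2) (- (of_real (\<mu> * k4) * x4))"
      by (rule CK4[OF n12 n23 n34 n41 dg s1 s2 mu])
    have "nondeg_planar_quad (emb P 0) (emb P (of_real (\<mu> * k1) * x1))
       (emb P (of_real (\<mu> * k1) * x1 + of_real (\<mu> * k2) * x2)) (emb P (- (of_real (\<mu> * k4) * x4)))"
      using c4 nondeg_emb by blast
    moreover have "emb P 0 = P" by (simp add: emb_def Lin_zero)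
    moreover have "emb P (of_real (\<mu> * k1) * x1) = P + (\<mu> * k1) *\<^sub>R (B-A)"
      unfolding emb_def Lin_scale L ..
    moreover have "emb P (of_real (\<mu> * k1) * x1 + of_real (\<mu> * k2) * x2) = P + (\<mu> * k1) *\<^sub>R (B-A) + (\<mu> * k2) *\<^sub>R (C-B)"
      unfolding emb_def Lin_add Lin_scale L by (simp add: add.assoc)
    moreover have "emb P (- (of_real (\<mu> * k4) * x4)) = P - (\<mu> * k4) *\<^sub>R (A-D)"
      unfolding emb_def Lin_minus Lin_scale L by simp
    ultimately show "nondeg_planar_quad P (P + (\<mu> * k1) *\<^sub>R (B-A))
        (P + (\<mu> * k1) *\<^sub>R (B-A) + (\<mu> * k2) *\<^sub>R (C-B)) (P - (\<mu> * k4) *\<^sub>R (A-D))" by simp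
  qed
  show ?thesis unfolding q_def[symmetric] K using q0 V1 V2a V2b V3 V4 by blast
qed



lemma const_int: "(\<And>n::int. D (n + 1) = D n) \<Longrightarrow> D n = D 0"
proof -
  assume h: "\<And>n::int. D (n + 1) = D n"
  show ?thesis
  proof (induct n rule: int_induct[where k = 0])
    case base then show ?case by simp
  next
    case (step1 i) then show ?case using h by simp
  next
    case (step2 i) then show ?case using h[of "i - 1"] by simp
  qed
qed

lemma antider: "\<exists>F::int \<Rightarrow> 'a::ab_group_add. F 0 = 0 \<and> (\<forall>k. F (k + 1) - F k = h k)"
proof -
  define F where "F k = (if 0 \<le> k then (\<Sum>i<nat k. h (int i)) else - (\<Sum>i<nat (-k). h (- int i - 1)))" for k
  have "F (k + 1) - F k = h k" for k
  proof (cases "0 \<le> k")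
    case True
    have "nat (k + 1) = Suc (nat k)" using True by simp
    then show ?thesis using True by (simp add: F_def)
  next
    case False
    show ?thesis
    proof (cases "k = -1")
      case True then show ?thesis by (simp add: F_def)
    next
      case False2: False
      have "nat (-k) = Suc (nat (- (k + 1)))" using False False2 by simp
      moreover have "- int (nat (- (k + 1))) - 1 = k" using False by simp
      ultimately show ?thesis using False False2 by (simp add: F_def)
    qed
  qed
  moreover have "F 0 = 0" by (simp add: F_def)
  ultimately show ?thesis by blast
qed



lemma sh_sh [simp]: "sh a b (sh c d u) = sh (a + c) (b + d) u" by (simp add: sh_def)
lemma sh_00 [simp]: "sh 0 0 u = u" by (simp add: sh_def)

lemma integrate:
  fixes H W :: "int \<times> int \<Rightarrow> 'a::ab_group_add"
  assumes comp: "\<And>u. H u + W (sh 1 0 u) = W u + H (sh 0 1 u)"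
  shows "\<exists>g. \<forall>u. g (sh 1 0 u) - g u = H u \<and> g (sh 0 1 u) - g u = W u"
proof -
  obtain G where G: "\<forall>k. G (k + 1) - G k = H (k, 0)" using antider[of "\<lambda>k. H (k, 0)"] by blast
  have "\<forall>m. \<exists>F. F 0 = 0 \<and> (\<forall>k. F (k + 1) - F k = W (m, k))"
  proof
    fix m show "\<exists>F. F 0 = 0 \<and> (\<forall>k. F (k + 1) - F k = W (m, k))" using antider[of "\<lambda>k. W (m, k)"] by blast
  qed
  from choice[OF this] obtain FF where FF0: "\<forall>m. FF m 0 = 0 \<and> (\<forall>k. FF m (k + 1) - FF m k = W (m, k))"
    by blast
  have FF: "\<And>m. FF m 0 = 0" "\<And>m k. FF m (k + 1) - FF m k = W (m, k)" using FF0 by auto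
  define g where "g u = G (fst u) + FF (fst u) (snd u)" for u
  have vert: "g (sh 0 1 u) - g u = W u" for u
    using FF(2)[of "fst u" "snd u"] by (simp add: g_def sh_def)
  have hor: "g (sh 1 0 (m, n)) - g (m, n) = H (m, n)" for m n
  proof -
    define Dd where "Dd n = g (m + 1, n) - g (m, n) - H (m, n)" for n
    have "Dd (n + 1) = Dd n" for n
    proof -
      have c: "H (m, n) + W (m + 1, n) = W (m, n) + H (m, n + 1)" using comp[of "(m, n)"] by (simp add: sh_def)
      have "Dd (n + 1) - Dd n = (FF (m + 1) (n + 1) - FF (m + 1) n) - (FF m (n + 1) - FF m n) - H (m, n + 1) + H (m, n)"
        by (simp add: Dd_def g_def algebra_simps)
      also have "\<dots> = W (m + 1, n) - W (m, n) - H (m, n + 1) + H (m, n)" using FF(2)[of "m + 1" n] FF(2)[of m n] by simp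
      also have "\<dots> = (H (m, n) + W (m + 1, n)) - (W (m, n) + H (m, n + 1))" by (simp add: algebra_simps)
      also have "\<dots> = 0" using c by simp
      finally show ?thesis by simp
    qed
    then have "Dd n = Dd 0" by (rule const_int)
    also have "Dd 0 = 0" using G[rule_format, of m] FF(1)[of m] FF(1)[of "m+1"] by (simp add: Dd_def g_def)
    finally show ?thesis by (simp add: Dd_def sh_def)
  qed
  show ?thesis
  proof (intro exI allI)
    fix u :: "int \<times> int"
    obtain m n where u: "u = (m, n)" by (cases u)
    show "g (sh 1 0 u) - g u = H u \<and> g (sh 0 1 u) - g u = W u" using hor vert unfolding u by simp
  qed
qed



definition kk1 :: "('a::euclidean_space) net2 \<Rightarrow> int \<times> int \<Rightarrow> real" where
  "kk1 f u = 1 / (norm (f (sh 1 0 u) - f u))^2"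
definition kk2 :: "('a::euclidean_space) net2 \<Rightarrow> int \<times> int \<Rightarrow> real" where
  "kk2 f u = 1 / (qfun f u * (norm (f (sh 1 1 u) - f (sh 1 0 u)))^2)"
definition kk3 :: "('a::euclidean_space) net2 \<Rightarrow> int \<times> int \<Rightarrow> real" where
  "kk3 f u = 1 / (norm (f (sh 0 1 u) - f (sh 1 1 u)))^2"
definition kk4 :: "('a::euclidean_space) net2 \<Rightarrow> int \<times> int \<Rightarrow> real" where
  "kk4 f u = 1 / (qfun f u * (norm (f u - f (sh 0 1 u)))^2)"

lemma LQ:
  fixes f :: "('a::euclidean_space) net2" and u :: "int \<times> int"
  assumes cn: "circular_net f"
  defines "A \<equiv> f u" and "B \<equiv> f (sh 1 0 u)" and "C \<equiv> f (sh 1 1 u)" and "D \<equiv> f (sh 0 1 u)"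
  shows "qfun f u \<noteq> 0 \<and>
    kk1 f u *\<^sub>R (B-A) + kk2 f u *\<^sub>R (C-B) + kk3 f u *\<^sub>R (D-C) + kk4 f u *\<^sub>R (A-D) = 0 \<and>
    (\<exists>c. kk1 f u *\<^sub>R (B-A) + kk2 f u *\<^sub>R (C-B) = c *\<^sub>R (D-B)) \<and>
    (\<exists>c. kk2 f u *\<^sub>R (C-B) + kk3 f u *\<^sub>R (D-C) = c *\<^sub>R (C-A)) \<and>
    (\<forall>c1 c2 c3 c4 c5 c6. c1 *\<^sub>R (B-A) + c2 *\<^sub>R (C-B) + c3 *\<^sub>R (D-C) + c4 *\<^sub>R (A-D) = 0 \<and>
        c1 *\<^sub>R (B-A) + c2 *\<^sub>R (C-B) = c5 *\<^sub>R (D-B) \<and> c2 *\<^sub>R (C-B) + c3 *\<^sub>R (D-C) = c6 *\<^sub>R (C-A) \<longrightarrow>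
      (\<exists>l. c1 = l * kk1 f u \<and> c2 = l * kk2 f u \<and> c3 = l * kk3 f u \<and> c4 = l * kk4 f u)) \<and>
    (\<forall>P \<mu>. \<mu> \<noteq> 0 \<longrightarrow> nondeg_planar_quad P (P + (\<mu> * kk1 f u) *\<^sub>R (B-A))
        (P + (\<mu> * kk1 f u) *\<^sub>R (B-A) + (\<mu> * kk2 f u) *\<^sub>R (C-B))
        (P - (\<mu> * kk4 f u) *\<^sub>R (A-D))) \<and> B \<noteq> A \<and> D \<noteq> A"
proof -
  have nd: "nondeg_planar_quad A B C D" using cn unfolding circular_net_def Q_net_def A_def B_def C_def D_def by blast
  have cc: "concircular A B C D" using cn unfolding circular_net_def A_def B_def C_def D_def by blast
  have BA: "B \<noteq> A \<and> D \<noteq> A" using nd unfolding nondeg_planar_quad_def by auto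
  show ?thesis using local_quad[OF nd cc] BA
    unfolding kk1_def kk2_def kk3_def kk4_def qfun_def A_def B_def C_def D_def by blast
qed



theorem mainTheorem12:
  fixes f :: "int \<times> int \<Rightarrow> 'a::euclidean_space"
  assumes "circular_net f"
  shows "isothermic_net f \<longleftrightarrow>
    (\<forall>u. qfun f u * qfun f (sh (-1) (-1) u) = qfun f (sh (-1) 0 u) * qfun f (sh 0 (-1) u))"
proof -
  note L = LQ[OF assms]
  note L1 = L[THEN conjunct2]
  note L2 = L1[THEN conjunct2]
  note L3 = L2[THEN conjunct2]
  note L4 = L3[THEN conjunct2]
  note L5 = L4[THEN conjunct2]
  note L6 = L5[THEN conjunct2]
  have q0: "\<And>u. qfun f u \<noteq> 0" by (rule L[THEN conjunct1])
  have BA: "\<And>u. f (sh 1 0 u) \<noteq> f u" by (rule L6[THEN conjunct1])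
  have DA: "\<And>u. f (sh 0 1 u) \<noteq> f u" by (rule L6[THEN conjunct2])
  have V1: "\<And>u. kk1 f u *\<^sub>R (f (sh 1 0 u) - f u) + kk2 f u *\<^sub>R (f (sh 1 1 u) - f (sh 1 0 u))
      + kk3 f u *\<^sub>R (f (sh 0 1 u) - f (sh 1 1 u)) + kk4 f u *\<^sub>R (f u - f (sh 0 1 u)) = 0"
    by (rule L1[THEN conjunct1])
  have V2a: "\<And>u. \<exists>c. kk1 f u *\<^sub>R (f (sh 1 0 u) - f u) + kk2 f u *\<^sub>R (f (sh 1 1 u) - f (sh 1 0 u))
      = c *\<^sub>R (f (sh 0 1 u) - f (sh 1 0 u))"
    by (rule L2[THEN conjunct1])
  have V2b: "\<And>u. \<exists>c. kk2 f u *\<^sub>R (f (sh 1 1 u) - f (sh 1 0 u)) + kk3 f u *\<^sub>R (f (sh 0 1 u) - f (sh 1 1 u))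
      = c *\<^sub>R (f (sh 1 1 u) - f u)"
    by (rule L3[THEN conjunct1])
  have V3: "\<And>u c1 c2 c3 c4 c5 c6.
      c1 *\<^sub>R (f (sh 1 0 u) - f u) + c2 *\<^sub>R (f (sh 1 1 u) - f (sh 1 0 u)) + c3 *\<^sub>R (f (sh 0 1 u) - f (sh 1 1 u)) + c4 *\<^sub>R (f u - f (sh 0 1 u)) = 0 \<Longrightarrow>
      c1 *\<^sub>R (f (sh 1 0 u) - f u) + c2 *\<^sub>R (f (sh 1 1 u) - f (sh 1 0 u)) = c5 *\<^sub>R (f (sh 0 1 u) - f (sh 1 0 u)) \<Longrightarrow>
      c2 *\<^sub>R (f (sh 1 1 u) - f (sh 1 0 u)) + c3 *\<^sub>R (f (sh 0 1 u) - f (sh 1 1 u)) = c6 *\<^sub>R (f (sh 1 1 u) - f u) \<Longrightarrow>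
      (\<exists>l. c1 = l * kk1 f u \<and> c2 = l * kk2 f u \<and> c3 = l * kk3 f u \<and> c4 = l * kk4 f u)"
    using L4[THEN conjunct1] by blast
  have V4: "\<And>u P \<mu>. \<mu> \<noteq> 0 \<Longrightarrow> nondeg_planar_quad P (P + (\<mu> * kk1 f u) *\<^sub>R (f (sh 1 0 u) - f u))
        (P + (\<mu> * kk1 f u) *\<^sub>R (f (sh 1 0 u) - f u) + (\<mu> * kk2 f u) *\<^sub>R (f (sh 1 1 u) - f (sh 1 0 u)))
        (P - (\<mu> * kk4 f u) *\<^sub>R (f u - f (sh 0 1 u)))"
    using L5[THEN conjunct1] by blast
  have Qf: "Q_net f" using assms unfolding circular_net_def by blast
  show ?thesis
  proof
    assume iso: "isothermic_net f"
    then obtain g where Qg: "Q_net g" and dq: "\<And>u. dual_quads (f u) (f (sh 1 0 u)) (f (sh 1 1 u)) (f (sh 0 1 u))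
                        (g u) (g (sh 1 0 u)) (g (sh 1 1 u)) (g (sh 0 1 u))"
      unfolding isothermic_net_def Koenigs_net_def by blast
    define REL where "REL u l \<longleftrightarrow>
      g (sh 1 0 u) - g u = (l * kk1 f u) *\<^sub>R (f (sh 1 0 u) - f u) \<and>
      g (sh 1 1 u) - g (sh 1 0 u) = (l * kk2 f u) *\<^sub>R (f (sh 1 1 u) - f (sh 1 0 u)) \<and>
      g (sh 0 1 u) - g (sh 1 1 u) = (l * kk3 f u) *\<^sub>R (f (sh 0 1 u) - f (sh 1 1 u)) \<and>
      g u - g (sh 0 1 u) = (l * kk4 f u) *\<^sub>R (f u - f (sh 0 1 u))" for u l
    have "\<forall>u. \<exists>l. REL u l"
    proof
      fix u
      obtain c1 c2 c3 c4 c5 c6 where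
        e1: "g (sh 1 0 u) - g u = c1 *\<^sub>R (f (sh 1 0 u) - f u)" and
        e2: "g (sh 1 1 u) - g (sh 1 0 u) = c2 *\<^sub>R (f (sh 1 1 u) - f (sh 1 0 u))" and
        e3: "g (sh 0 1 u) - g (sh 1 1 u) = c3 *\<^sub>R (f (sh 0 1 u) - f (sh 1 1 u))" and
        e4: "g u - g (sh 0 1 u) = c4 *\<^sub>R (f u - f (sh 0 1 u))" and
        e5: "g (sh 1 1 u) - g u = c5 *\<^sub>R (f (sh 0 1 u) - f (sh 1 0 u))" and
        e6: "g (sh 0 1 u) - g (sh 1 0 u) = c6 *\<^sub>R (f (sh 1 1 u) - f u)"
        using dq[of u] unfolding dual_quads_def parallel_def by blast
      have E1: "c1 *\<^sub>R (f (sh 1 0 u) - f u) + c2 *\<^sub>R (f (sh 1 1 u) - f (sh 1 0 u)) + c3 *\<^sub>R (f (sh 0 1 u) - f (sh 1 1 u)) + c4 *\<^sub>R (f u - f (sh 0 1 u)) = 0"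
        unfolding e1[symmetric] e2[symmetric] e3[symmetric] e4[symmetric] by simp
      have E2: "c1 *\<^sub>R (f (sh 1 0 u) - f u) + c2 *\<^sub>R (f (sh 1 1 u) - f (sh 1 0 u)) = c5 *\<^sub>R (f (sh 0 1 u) - f (sh 1 0 u))"
        unfolding e1[symmetric] e2[symmetric] e5[symmetric] by simp
      have E3: "c2 *\<^sub>R (f (sh 1 1 u) - f (sh 1 0 u)) + c3 *\<^sub>R (f (sh 0 1 u) - f (sh 1 1 u)) = c6 *\<^sub>R (f (sh 1 1 u) - f u)"
        unfolding e2[symmetric] e3[symmetric] e6[symmetric] by simp
      obtain l where "c1 = l * kk1 f u" "c2 = l * kk2 f u" "c3 = l * kk3 f u" "c4 = l * kk4 f u"
        using V3[OF E1 E2 E3] by blast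
      then have "REL u l" unfolding REL_def using e1 e2 e3 e4 by simp
      then show "\<exists>l. REL u l" by blast
    qed
    from choice[OF this] obtain \<mu> where mu: "\<And>u. REL u (\<mu> u)" by blast
    have R1: "g (sh 1 0 u) - g u = (\<mu> u * kk1 f u) *\<^sub>R (f (sh 1 0 u) - f u)" for u
      using mu[of u] unfolding REL_def by blast
    have R2: "g (sh 1 1 u) - g (sh 1 0 u) = (\<mu> u * kk2 f u) *\<^sub>R (f (sh 1 1 u) - f (sh 1 0 u))" for u
      using mu[of u] unfolding REL_def by blast
    have R3: "g (sh 0 1 u) - g (sh 1 1 u) = (\<mu> u * kk3 f u) *\<^sub>R (f (sh 0 1 u) - f (sh 1 1 u))" for u
      using mu[of u] unfolding REL_def by blast
    have R4: "g u - g (sh 0 1 u) = (\<mu> u * kk4 f u) *\<^sub>R (f u - f (sh 0 1 u))" for u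
      using mu[of u] unfolding REL_def by blast
    have mu0: "\<mu> u \<noteq> 0" for u
    proof
      assume "\<mu> u = 0"
      then have "g (sh 1 0 u) = g u" using R1[of u] by simp
      moreover have "g u \<noteq> g (sh 1 0 u)"
      proof -
        have "nondeg_planar_quad (g u) (g (sh 1 0 u)) (g (sh 1 1 u)) (g (sh 0 1 u))" using Qg unfolding Q_net_def by blast
        then have "distinct [g u, g (sh 1 0 u), g (sh 1 1 u), g (sh 0 1 u)]" unfolding nondeg_planar_quad_def by blast
        then show ?thesis by simp
      qed
      ultimately show False by simp
    qed
    have hor: "\<mu> (sh 0 (-1) u) = \<mu> u" for u
    proof -
      define N where "N = (norm (f (sh 1 0 u) - f u))^2"
      have N0: "N \<noteq> 0" using BA[of u] by (simp add: N_def)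
      have a: "g (sh 1 0 u) - g u = (\<mu> u * (1 / N)) *\<^sub>R (f (sh 1 0 u) - f u)"
        using R1[of u] unfolding kk1_def N_def by simp
      have b0: "g u - g (sh 1 0 u) = (\<mu> (sh 0 (-1) u) * (1 / N)) *\<^sub>R (f u - f (sh 1 0 u))"
        using R3[of "sh 0 (-1) u"] unfolding kk3_def N_def by (simp add: norm_minus_commute)
      have b: "g (sh 1 0 u) - g u = (\<mu> (sh 0 (-1) u) * (1 / N)) *\<^sub>R (f (sh 1 0 u) - f u)"
        using arg_cong[OF b0, of uminus] by (simp add: scaleR_diff_right)
      have "(\<mu> u * (1 / N)) *\<^sub>R (f (sh 1 0 u) - f u) = (\<mu> (sh 0 (-1) u) * (1 / N)) *\<^sub>R (f (sh 1 0 u) - f u)"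
        by (rule trans[OF a[symmetric] b])
      then have "\<mu> u * (1 / N) = \<mu> (sh 0 (-1) u) * (1 / N) \<or> f (sh 1 0 u) - f u = 0"
        by (simp only: scaleR_cancel_right)
      moreover have "f (sh 1 0 u) - f u \<noteq> 0" using BA[of u] by simp
      ultimately have "\<mu> u * (1 / N) = \<mu> (sh 0 (-1) u) * (1 / N)" by blast
      then show ?thesis using N0 by simp
    qed
    have ver: "\<mu> (sh (-1) 0 u) / qfun f (sh (-1) 0 u) = \<mu> u / qfun f u" for u
    proof -
      define M where "M = (norm (f (sh 0 1 u) - f u))^2"
      have M0: "M \<noteq> 0" using DA[of u] by (simp add: M_def)
      have a0: "g u - g (sh 0 1 u) = (\<mu> u * (1 / (qfun f u * M))) *\<^sub>R (f u - f (sh 0 1 u))"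
        using R4[of u] unfolding kk4_def M_def by (simp add: norm_minus_commute)
      have a: "g (sh 0 1 u) - g u = (\<mu> u * (1 / (qfun f u * M))) *\<^sub>R (f (sh 0 1 u) - f u)"
        using arg_cong[OF a0, of uminus] by (simp add: scaleR_diff_right)
      have b: "g (sh 0 1 u) - g u = (\<mu> (sh (-1) 0 u) * (1 / (qfun f (sh (-1) 0 u) * M))) *\<^sub>R (f (sh 0 1 u) - f u)"
        using R2[of "sh (-1) 0 u"] unfolding kk2_def M_def by simp
      have "(\<mu> u * (1 / (qfun f u * M))) *\<^sub>R (f (sh 0 1 u) - f u) = (\<mu> (sh (-1) 0 u) * (1 / (qfun f (sh (-1) 0 u) * M))) *\<^sub>R (f (sh 0 1 u) - f u)"
        by (rule trans[OF a[symmetric] b])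
      then have "\<mu> u * (1 / (qfun f u * M)) = \<mu> (sh (-1) 0 u) * (1 / (qfun f (sh (-1) 0 u) * M)) \<or> f (sh 0 1 u) - f u = 0"
        by (simp only: scaleR_cancel_right)
      moreover have "f (sh 0 1 u) - f u \<noteq> 0" using DA[of u] by simp
      ultimately have "\<mu> u * (1 / (qfun f u * M)) = \<mu> (sh (-1) 0 u) * (1 / (qfun f (sh (-1) 0 u) * M))" by blast
      then show ?thesis using M0 q0 by (simp add: field_simps)
    qed
    show "\<forall>u. qfun f u * qfun f (sh (-1) (-1) u) = qfun f (sh (-1) 0 u) * qfun f (sh 0 (-1) u)"
    proof
      fix u
      have h1: "\<mu> (sh 0 (-1) u) = \<mu> u" by (rule hor)
      have h2: "\<mu> (sh (-1) (-1) u) = \<mu> (sh (-1) 0 u)" using hor[of "sh (-1) 0 u"] by simp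
      have v1: "\<mu> (sh (-1) 0 u) / qfun f (sh (-1) 0 u) = \<mu> u / qfun f u" by (rule ver)
      have v2: "\<mu> (sh (-1) (-1) u) / qfun f (sh (-1) (-1) u) = \<mu> (sh 0 (-1) u) / qfun f (sh 0 (-1) u)"
        using ver[of "sh 0 (-1) u"] by simp
      have nz: "\<mu> u \<noteq> 0" "\<mu> (sh (-1) 0 u) \<noteq> 0" "qfun f u \<noteq> 0" "qfun f (sh (-1) 0 u) \<noteq> 0"
        "qfun f (sh (-1) (-1) u) \<noteq> 0" "qfun f (sh 0 (-1) u) \<noteq> 0" using mu0 q0 by auto
      show "qfun f u * qfun f (sh (-1) (-1) u) = qfun f (sh (-1) 0 u) * qfun f (sh 0 (-1) u)"
      proof -
        have E1: "qfun f u * \<mu> (sh (- 1) 0 u) = \<mu> u * qfun f (sh (- 1) 0 u)"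
          using v1 nz by (simp add: field_simps)
        have E2: "\<mu> (sh (- 1) 0 u) * qfun f (sh 0 (- 1) u) = \<mu> u * qfun f (sh (- 1) (- 1) u)"
          using v2 nz unfolding h1 h2 by (simp add: field_simps)
        have "\<mu> u * (qfun f u * qfun f (sh (-1) (-1) u)) = \<mu> u * (qfun f (sh (-1) 0 u) * qfun f (sh 0 (-1) u))"
          using E1 E2 by algebra
        then show ?thesis using nz(1) by simp
      qed
    qed
  next
    assume prod: "\<forall>u. qfun f u * qfun f (sh (-1) (-1) u) = qfun f (sh (-1) 0 u) * qfun f (sh 0 (-1) u)"
    define q where "q m n = qfun f (m, n)" for m n
    have qn: "q m n \<noteq> 0" for m n using q0 unfolding q_def by blast
    have pr: "q m n * q (m - 1) (n - 1) = q (m - 1) n * q m (n - 1)" for m n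
      using prod[rule_format, of "(m, n)"] unfolding q_def by (simp add: sh_def)
    have rel: "q m 0 * q (m - 1) n = q (m - 1) 0 * q m n" for m n
    proof (induct n rule: int_induct[where k = 0])
      case base then show ?case by simp
    next
      case (step1 i)
      have p: "q m (i + 1) * q (m - 1) i = q (m - 1) (i + 1) * q m i" using pr[of m "i + 1"] by simp
      have "(q m 0 * q (m - 1) (i + 1)) * q m i = (q (m - 1) 0 * q m (i + 1)) * q m i"
      proof -
        have "(q m 0 * q (m - 1) (i + 1)) * q m i = q m 0 * (q (m - 1) (i + 1) * q m i)" by (simp add: ac_simps)
        also have "\<dots> = q m 0 * (q m (i + 1) * q (m - 1) i)" using p by simp
        also have "\<dots> = q m (i + 1) * (q m 0 * q (m - 1) i)" by (simp add: ac_simps)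
        also have "\<dots> = q m (i + 1) * (q (m - 1) 0 * q m i)" using step1 by simp
        finally show ?thesis by (simp add: ac_simps)
      qed
      then show ?case using qn[of m i] by simp
    next
      case (step2 i)
      have p: "q m i * q (m - 1) (i - 1) = q (m - 1) i * q m (i - 1)" using pr[of m i] by simp
      have "(q m 0 * q (m - 1) (i - 1)) * q m i = (q (m - 1) 0 * q m (i - 1)) * q m i"
      proof -
        have "(q m 0 * q (m - 1) (i - 1)) * q m i = q m 0 * (q m i * q (m - 1) (i - 1))" by (simp add: ac_simps)
        also have "\<dots> = q m 0 * (q (m - 1) i * q m (i - 1))" using p by simp
        also have "\<dots> = q m (i - 1) * (q m 0 * q (m - 1) i)" by (simp add: ac_simps)
        also have "\<dots> = q m (i - 1) * (q (m - 1) 0 * q m i)" using step2 by simp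
        finally show ?thesis by (simp add: ac_simps)
      qed
      then show ?case using qn[of m i] by simp
    qed
    define \<mu> where "\<mu> (u::int \<times> int) = q (fst u) 0" for u
    have mu0: "\<mu> u \<noteq> 0" for u using qn by (simp add: \<mu>_def)
    define H where "H u = (\<mu> u * kk1 f u) *\<^sub>R (f (sh 1 0 u) - f u)" for u
    define W where "W u = - ((\<mu> u * kk4 f u) *\<^sub>R (f u - f (sh 0 1 u)))" for u
    have Wsh: "W (sh 1 0 u) = (\<mu> u * kk2 f u) *\<^sub>R (f (sh 1 1 u) - f (sh 1 0 u))" for u
    proof -
      obtain m n where u: "u = (m, n)" by (cases u)
      have r: "q (m + 1) 0 * q m n = q m 0 * q (m + 1) n" using rel[of "m + 1" n] by simp
      have c: "\<mu> (sh 1 0 u) * kk4 f (sh 1 0 u) = \<mu> u * kk2 f u"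
      proof -
        have "\<mu> (sh 1 0 u) * kk4 f (sh 1 0 u) = q (m + 1) 0 / (q (m + 1) n * (norm (f (sh 1 0 u) - f (sh 1 1 u)))^2)"
          unfolding \<mu>_def kk4_def u by (simp add: sh_def q_def)
        also have "\<dots> = (q (m + 1) 0 / q (m + 1) n) / (norm (f (sh 1 1 u) - f (sh 1 0 u)))^2"
          by (simp add: norm_minus_commute divide_divide_eq_left)
        also have "q (m + 1) 0 / q (m + 1) n = q m 0 / q m n"
          using r qn[of m n] qn[of "m+1" n] by (simp add: field_simps)
        also have "(q m 0 / q m n) / (norm (f (sh 1 1 u) - f (sh 1 0 u)))^2 = q m 0 / (q m n * (norm (f (sh 1 1 u) - f (sh 1 0 u)))^2)"
          by (simp add: divide_divide_eq_left)
        also have "\<dots> = \<mu> u * kk2 f u" unfolding \<mu>_def kk2_def u by (simp add: q_def)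
        finally show ?thesis .
      qed
      have "W (sh 1 0 u) = - ((\<mu> (sh 1 0 u) * kk4 f (sh 1 0 u)) *\<^sub>R (f (sh 1 0 u) - f (sh 1 1 u)))"
        unfolding W_def by simp
      also have "\<dots> = (\<mu> u * kk2 f u) *\<^sub>R (f (sh 1 1 u) - f (sh 1 0 u))"
        unfolding c by (simp add: scaleR_diff_right)
      finally show ?thesis .
    qed
    have Hsh: "H (sh 0 1 u) = - ((\<mu> u * kk3 f u) *\<^sub>R (f (sh 0 1 u) - f (sh 1 1 u)))" for u
    proof -
      have "\<mu> (sh 0 1 u) = \<mu> u" by (simp add: \<mu>_def sh_def)
      moreover have "kk1 f (sh 0 1 u) = kk3 f u" by (simp add: kk1_def kk3_def norm_minus_commute)
      ultimately show ?thesis unfolding H_def by (simp add: scaleR_diff_right)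
    qed
    have comp: "H u + W (sh 1 0 u) = W u + H (sh 0 1 u)" for u
    proof -
      have "\<mu> u *\<^sub>R (kk1 f u *\<^sub>R (f (sh 1 0 u) - f u) + kk2 f u *\<^sub>R (f (sh 1 1 u) - f (sh 1 0 u))
        + kk3 f u *\<^sub>R (f (sh 0 1 u) - f (sh 1 1 u)) + kk4 f u *\<^sub>R (f u - f (sh 0 1 u))) = 0"
        using V1[of u] by simp
      then show ?thesis unfolding Wsh Hsh unfolding H_def W_def
        by (simp add: scaleR_add_right algebra_simps)
    qed
    obtain g where g: "\<And>u. g (sh 1 0 u) - g u = H u" "\<And>u. g (sh 0 1 u) - g u = W u"
      using integrate[of H W, OF comp] by blast
    have gB: "g (sh 1 0 u) = g u + (\<mu> u * kk1 f u) *\<^sub>R (f (sh 1 0 u) - f u)" for u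
      using g(1)[of u] unfolding H_def by (simp add: algebra_simps)
    have gD: "g (sh 0 1 u) = g u - (\<mu> u * kk4 f u) *\<^sub>R (f u - f (sh 0 1 u))" for u
      using g(2)[of u] unfolding W_def by (simp add: algebra_simps)
    have gC: "g (sh 1 1 u) = g u + (\<mu> u * kk1 f u) *\<^sub>R (f (sh 1 0 u) - f u) + (\<mu> u * kk2 f u) *\<^sub>R (f (sh 1 1 u) - f (sh 1 0 u))" for u
      using g(2)[of "sh 1 0 u"] gB[of u] Wsh[of u] by (simp add: algebra_simps)
    have gC2: "g (sh 1 1 u) = g (sh 0 1 u) - (\<mu> u * kk3 f u) *\<^sub>R (f (sh 0 1 u) - f (sh 1 1 u))" for u
      using g(1)[of "sh 0 1 u"] Hsh[of u] by (simp add: algebra_simps)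
    have Qg: "Q_net g" unfolding Q_net_def
    proof
      fix u
      show "nondeg_planar_quad (g u) (g (sh 1 0 u)) (g (sh 1 1 u)) (g (sh 0 1 u))"
        unfolding gB gC gD using V4[where u=u and P="g u" and \<mu>="\<mu> u", OF mu0[of u]] .
    qed
    have dq: "dual_quads (f u) (f (sh 1 0 u)) (f (sh 1 1 u)) (f (sh 0 1 u))
                        (g u) (g (sh 1 0 u)) (g (sh 1 1 u)) (g (sh 0 1 u))" for u
    proof -
      obtain c where c: "kk1 f u *\<^sub>R (f (sh 1 0 u) - f u) + kk2 f u *\<^sub>R (f (sh 1 1 u) - f (sh 1 0 u))
        = c *\<^sub>R (f (sh 0 1 u) - f (sh 1 0 u))" using V2a by blast
      obtain c' where c': "kk2 f u *\<^sub>R (f (sh 1 1 u) - f (sh 1 0 u)) + kk3 f u *\<^sub>R (f (sh 0 1 u) - f (sh 1 1 u))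
        = c' *\<^sub>R (f (sh 1 1 u) - f u)" using V2b by blast
      have p1: "parallel (g (sh 1 0 u) - g u) (f (sh 1 0 u) - f u)"
        unfolding parallel_def gB by auto
      have p2: "parallel (g (sh 1 1 u) - g (sh 1 0 u)) (f (sh 1 1 u) - f (sh 1 0 u))"
        unfolding parallel_def gC gB by auto
      have p3: "parallel (g (sh 0 1 u) - g (sh 1 1 u)) (f (sh 0 1 u) - f (sh 1 1 u))"
        unfolding parallel_def gC2 by auto
      have p4: "parallel (g u - g (sh 0 1 u)) (f u - f (sh 0 1 u))"
        unfolding parallel_def gD by auto
      have p5: "parallel (g (sh 1 1 u) - g u) (f (sh 0 1 u) - f (sh 1 0 u))"
      proof -
        have "g (sh 1 1 u) - g u = \<mu> u *\<^sub>R (kk1 f u *\<^sub>R (f (sh 1 0 u) - f u) + kk2 f u *\<^sub>R (f (sh 1 1 u) - f (sh 1 0 u)))"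
          unfolding gC by (simp add: scaleR_add_right)
        also have "\<dots> = (\<mu> u * c) *\<^sub>R (f (sh 0 1 u) - f (sh 1 0 u))" unfolding c by simp
        finally show ?thesis unfolding parallel_def by blast
      qed
      have p6: "parallel (g (sh 0 1 u) - g (sh 1 0 u)) (f (sh 1 1 u) - f u)"
      proof -
        have "g (sh 0 1 u) - g (sh 1 0 u) = (g (sh 1 1 u) - g (sh 1 0 u)) + (g (sh 0 1 u) - g (sh 1 1 u))" by simp
        also have "\<dots> = \<mu> u *\<^sub>R (kk2 f u *\<^sub>R (f (sh 1 1 u) - f (sh 1 0 u)) + kk3 f u *\<^sub>R (f (sh 0 1 u) - f (sh 1 1 u)))"
        proof -
          have "g (sh 1 1 u) - g (sh 1 0 u) = (\<mu> u * kk2 f u) *\<^sub>R (f (sh 1 1 u) - f (sh 1 0 u))"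
            unfolding gC gB by simp
          moreover have "g (sh 0 1 u) - g (sh 1 1 u) = (\<mu> u * kk3 f u) *\<^sub>R (f (sh 0 1 u) - f (sh 1 1 u))"
            unfolding gC2 by simp
          ultimately show ?thesis by (simp add: scaleR_add_right)
        qed
        also have "\<dots> = (\<mu> u * c') *\<^sub>R (f (sh 1 1 u) - f u)" unfolding c' by simp
        finally show ?thesis unfolding parallel_def by blast
      qed
      show ?thesis unfolding dual_quads_def using p1 p2 p3 p4 p5 p6 by blast
    qed
    show "isothermic_net f"
      unfolding isothermic_net_def Koenigs_net_def using assms Qf Qg dq by blast
  qed
qed


end
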